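(* Let $n\ge5$ and $c\ge1$. Then the commutator subgroup $UW_n(c)'$ is perfect, i.e. $[UW_n(c)',UW_n(c)']=UW_n(c)'$.
   Context: $UV_n(c)$ ($n\ge2$, $c\ge1$) is the group with generators $\rho_i$ ($1\le i\le n-1$), $\sigma_{i,t}$ ($1\le i\le n-1$, $1\le t\le c$) and relations $\rho_i\rho_{i+1}\rho_i=\rho_{i+1}\rho_i\rho_{i+1}$ ($1\le i\le n-2$), $\rho_i\rho_j=\rho_j\rho_i$ ($|i-j|\ge2$), $\rho_i^2=1$, $\sigma_{i,t}\sigma_{j,\ell}=\sigma_{j,\ell}\sigma_{i,t}$ ($|i-j|\ge2$, $1\le t,\ell\le c$), $\sigma_{i,t}\rho_j=\rho_j\sigma_{i,t}$ ($|i-j|\ge2$), $\rho_i\rho_{i+1}\sigma_{i,t}=\sigma_{i+1,t}\rho_i\rho_{i+1}$ ($1\le i\le n-2$, $1\le t\le c$). The universal welded braid group $UW_n(c)$ is the quotient of $UV_n(c)$ by the additional relations $\rho_i\sigma_{i+1,t}\sigma_{i,t}=\sigma_{i+1,t}\sigma_{i,t}\rho_{i+1}$ for all $1\le i\le n-2$, $1\le t\le c$. *)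

theory Defs
  imports "HOL-Algebra.Algebra"
begin

text \<open>Generators: Rho i stands for rho_i, Sig i t stands for sigma_{i,t}.
  Indices are 1-based as in the paper.\<close>

datatype gen = Rho nat | Sig nat nat

definition valid_gen :: "nat \<Rightarrow> nat \<Rightarrow> gen \<Rightarrow> bool" where
  "valid_gen n c g = (case g of
      Rho i \<Rightarrow> 1 \<le> i \<and> i \<le> n - 1
    | Sig i t \<Rightarrow> 1 \<le> i \<and> i \<le> n - 1 \<and> 1 \<le> t \<and> t \<le> c)"

text \<open>Words in the free group: letters are (generator, exponent sign), True = +1, False = -1.\<close>

type_synonym word = "(gen \<times> bool) list"

definition valid_word :: "nat \<Rightarrow> nat \<Rightarrow> word \<Rightarrow> bool" where
  "valid_word n c w = (\<forall>x \<in> set w. valid_gen n c (fst x))"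

definition g :: "gen \<Rightarrow> word" where
  "g x = [(x, True)]"

definition uv_rels :: "nat \<Rightarrow> nat \<Rightarrow> (word \<times> word) set" where
  "uv_rels n c =
     {(g (Rho i) @ g (Rho (i+1)) @ g (Rho i), g (Rho (i+1)) @ g (Rho i) @ g (Rho (i+1))) | i.
        1 \<le> i \<and> i \<le> n - 2}
   \<union> {(g (Rho i) @ g (Rho j), g (Rho j) @ g (Rho i)) | i j.
        1 \<le> i \<and> i \<le> n - 1 \<and> 1 \<le> j \<and> j \<le> n - 1 \<and> (i \<ge> j + 2 \<or> j \<ge> i + 2)}
   \<union> {(g (Rho i) @ g (Rho i), []) | i. 1 \<le> i \<and> i \<le> n - 1}
   \<union> {(g (Sig i t) @ g (Sig j l), g (Sig j l) @ g (Sig i t)) | i j t l.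
        1 \<le> i \<and> i \<le> n - 1 \<and> 1 \<le> j \<and> j \<le> n - 1 \<and> (i \<ge> j + 2 \<or> j \<ge> i + 2)
        \<and> 1 \<le> t \<and> t \<le> c \<and> 1 \<le> l \<and> l \<le> c}
   \<union> {(g (Sig i t) @ g (Rho j), g (Rho j) @ g (Sig i t)) | i j t.
        1 \<le> i \<and> i \<le> n - 1 \<and> 1 \<le> j \<and> j \<le> n - 1 \<and> (i \<ge> j + 2 \<or> j \<ge> i + 2)
        \<and> 1 \<le> t \<and> t \<le> c}
   \<union> {(g (Rho i) @ g (Rho (i+1)) @ g (Sig i t), g (Sig (i+1) t) @ g (Rho i) @ g (Rho (i+1))) | i t.
        1 \<le> i \<and> i \<le> n - 2 \<and> 1 \<le> t \<and> t \<le> c}"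

definition uw_rels :: "nat \<Rightarrow> nat \<Rightarrow> (word \<times> word) set" where
  "uw_rels n c = uv_rels n c
   \<union> {(g (Rho i) @ g (Sig (i+1) t) @ g (Sig i t), g (Sig (i+1) t) @ g (Sig i t) @ g (Rho (i+1))) | i t.
        1 \<le> i \<and> i \<le> n - 2 \<and> 1 \<le> t \<and> t \<le> c}"

inductive pres_eqv :: "(gen \<Rightarrow> bool) \<Rightarrow> (word \<times> word) set \<Rightarrow> word \<Rightarrow> word \<Rightarrow> bool"
  for V :: "gen \<Rightarrow> bool" and R :: "(word \<times> word) set" where
  rel: "(u, v) \<in> R \<Longrightarrow> pres_eqv V R u v"
| cancel: "V x \<Longrightarrow> pres_eqv V R [(x, b), (x, \<not> b)] []"
| refl: "\<forall>y \<in> set w. V (fst y) \<Longrightarrow> pres_eqv V R w w"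
| sym: "pres_eqv V R u v \<Longrightarrow> pres_eqv V R v u"
| trans: "pres_eqv V R u v \<Longrightarrow> pres_eqv V R v w \<Longrightarrow> pres_eqv V R u w"
| ctxt: "pres_eqv V R u v \<Longrightarrow> \<forall>y \<in> set a. V (fst y) \<Longrightarrow> \<forall>y \<in> set b. V (fst y)
         \<Longrightarrow> pres_eqv V R (a @ u @ b) (a @ v @ b)"

definition presented_group :: "(gen \<Rightarrow> bool) \<Rightarrow> (word \<times> word) set \<Rightarrow> word set monoid" where
  "presented_group V R =
     \<lparr> carrier = {w. \<forall>y \<in> set w. V (fst y)} // {(u, v). pres_eqv V R u v},
       monoid.mult = (\<lambda>A B. {w. \<exists>u\<in>A. \<exists>v\<in>B. pres_eqv V R w (u @ v)}),
       one = {w. pres_eqv V R w []} \<rparr>"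

definition UV :: "nat \<Rightarrow> nat \<Rightarrow> word set monoid" where
  "UV n c = presented_group (valid_gen n c) (uv_rels n c)"

definition UW :: "nat \<Rightarrow> nat \<Rightarrow> word set monoid" where
  "UW n c = presented_group (valid_gen n c) (uw_rels n c)"

end

theory Submission
  imports Defs
begin


context group begin

lemma my_cancel1 [simp]: "a \<in> carrier G \<Longrightarrow> b \<in> carrier G \<Longrightarrow> inv a \<otimes> (a \<otimes> b) = b"
  by (simp add: m_assoc[symmetric])
lemma my_cancel2 [simp]: "a \<in> carrier G \<Longrightarrow> b \<in> carrier G \<Longrightarrow> a \<otimes> (inv a \<otimes> b) = b"
  by (simp add: m_assoc[symmetric])

lemma braid_comm_eq: assumes "a \<in> carrier G" "b \<in> carrier G" "a \<otimes> (b \<otimes> a) = b \<otimes> (a \<otimes> b)"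
  "a \<otimes> b = b \<otimes> a" shows "b = a"
proof -
  have "a \<otimes> (a \<otimes> b) = a \<otimes> (b \<otimes> a)" by (simp only: assms(4))
  also have "... = b \<otimes> (a \<otimes> b)" by (rule assms(3))
  finally have "a \<otimes> (a \<otimes> b) = b \<otimes> (a \<otimes> b)" .
  then have "a = b" using r_cancel[of "a \<otimes> b" a b] assms(1,2) by simp
  then show ?thesis by simp
qed

lemma comm_inv: assumes "a \<in> carrier G" "b \<in> carrier G" "a \<otimes> b = b \<otimes> a"
  shows "inv a \<otimes> b = b \<otimes> inv a"
proof -
  have "inv a \<otimes> b = inv a \<otimes> (b \<otimes> a) \<otimes> inv a" using assms(1,2) by (simp add: m_assoc)
  also have "... = inv a \<otimes> (a \<otimes> b) \<otimes> inv a" by (simp only: assms(3))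
  also have "... = b \<otimes> inv a" using assms(1,2) by (simp add: m_assoc)
  finally show ?thesis .
qed

lemma comm_mult: assumes "a \<in> carrier G" "b \<in> carrier G" "z \<in> carrier G"
   "a \<otimes> z = z \<otimes> a" "b \<otimes> z = z \<otimes> b" shows "(a \<otimes> b) \<otimes> z = z \<otimes> (a \<otimes> b)"
proof -
  have "(a \<otimes> b) \<otimes> z = a \<otimes> (b \<otimes> z)" using assms(1-3) by (simp add: m_assoc)
  also have "... = a \<otimes> (z \<otimes> b)" by (simp only: assms(5))
  also have "... = (a \<otimes> z) \<otimes> b" using assms(1-3) by (simp add: m_assoc)
  also have "... = (z \<otimes> a) \<otimes> b" by (simp only: assms(4))
  also have "... = z \<otimes> (a \<otimes> b)" using assms(1-3) by (simp add: m_assoc)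
  finally show ?thesis .
qed

lemma conj_D: assumes "x \<in> carrier G" "y \<in> carrier G" "k \<in> carrier G" "x = k \<otimes> y \<otimes> inv k"
  shows "x \<otimes> inv y \<in> derived G (carrier G)"
proof -
  have "k \<otimes> y \<otimes> inv k \<otimes> inv y \<in> derived_set G (carrier G)"
    by (rule UN_I[OF assms(3)], rule UN_I[OF assms(2)], rule singletonI)
  then have "k \<otimes> y \<otimes> inv k \<otimes> inv y \<in> derived G (carrier G)"
    unfolding derived_def by (rule generate.incl)
  then show ?thesis using assms(4) by simp
qed

lemma keyK:
  assumes abc: "a \<in> carrier G" "b \<in> carrier G" "c \<in> carrier G"
    and D1: "a \<otimes> inv c \<in> derived G (carrier G)" and D2: "b \<otimes> inv c \<in> derived G (carrier G)"
    and ca: "a \<otimes> c = c \<otimes> a" and cb: "b \<otimes> c = c \<otimes> b"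
    and meta: "\<And>x y. x \<in> derived G (carrier G) \<Longrightarrow> y \<in> derived G (carrier G) \<Longrightarrow> x \<otimes> y = y \<otimes> x"
  shows "a \<otimes> b = b \<otimes> a"
proof -
  have ib: "inv c \<otimes> b = b \<otimes> inv c" using comm_inv[OF abc(3,2) cb[symmetric]] .
  have ia: "inv c \<otimes> a = a \<otimes> inv c" using comm_inv[OF abc(3,1) ca[symmetric]] .
  have e1: "(a \<otimes> inv c) \<otimes> (b \<otimes> inv c) = a \<otimes> b \<otimes> inv c \<otimes> inv c"
  proof -
    have "(a \<otimes> inv c) \<otimes> (b \<otimes> inv c) = a \<otimes> (inv c \<otimes> b) \<otimes> inv c" using abc by (simp add: m_assoc)
    also have "... = a \<otimes> (b \<otimes> inv c) \<otimes> inv c" by (simp only: ib)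
    also have "... = a \<otimes> b \<otimes> inv c \<otimes> inv c" using abc by (simp add: m_assoc)
    finally show ?thesis .
  qed
  have e2: "(b \<otimes> inv c) \<otimes> (a \<otimes> inv c) = b \<otimes> a \<otimes> inv c \<otimes> inv c"
  proof -
    have "(b \<otimes> inv c) \<otimes> (a \<otimes> inv c) = b \<otimes> (inv c \<otimes> a) \<otimes> inv c" using abc by (simp add: m_assoc)
    also have "... = b \<otimes> (a \<otimes> inv c) \<otimes> inv c" by (simp only: ia)
    also have "... = b \<otimes> a \<otimes> inv c \<otimes> inv c" using abc by (simp add: m_assoc)
    finally show ?thesis .
  qed
  have "(a \<otimes> inv c) \<otimes> (b \<otimes> inv c) = (b \<otimes> inv c) \<otimes> (a \<otimes> inv c)" using meta D1 D2 by blast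
  hence "a \<otimes> b \<otimes> inv c \<otimes> inv c = b \<otimes> a \<otimes> inv c \<otimes> inv c" by (simp only: e1 e2)
  hence "a \<otimes> b \<otimes> inv c = b \<otimes> a \<otimes> inv c" using abc r_cancel[of "inv c" "a \<otimes> b \<otimes> inv c" "b \<otimes> a \<otimes> inv c"] by simp
  thus ?thesis using abc r_cancel[of "inv c" "a \<otimes> b" "b \<otimes> a"] by simp
qed

lemma core:
  fixes r :: "nat \<Rightarrow> 'a" and s :: "nat \<Rightarrow> nat \<Rightarrow> 'a" and n c :: nat
  assumes n5: "n \<ge> 5"
  and rc: "\<And>i. 1\<le>i \<Longrightarrow> i\<le>n-1 \<Longrightarrow> r i \<in> carrier G"
  and sc: "\<And>i t. 1\<le>i \<Longrightarrow> i\<le>n-1 \<Longrightarrow> 1\<le>t \<Longrightarrow> t\<le>c \<Longrightarrow> s i t \<in> carrier G"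
  and braid: "\<And>i. 1\<le>i \<Longrightarrow> i\<le>n-2 \<Longrightarrow> r i \<otimes> (r (i+1) \<otimes> r i) = r (i+1) \<otimes> (r i \<otimes> r (i+1))"
  and rrf: "\<And>i j. 1\<le>i \<Longrightarrow> i\<le>n-1 \<Longrightarrow> 1\<le>j \<Longrightarrow> j\<le>n-1 \<Longrightarrow> (i\<ge>j+2 \<or> j\<ge>i+2) \<Longrightarrow> r i \<otimes> r j = r j \<otimes> r i"
  and rsq: "\<And>i. 1\<le>i \<Longrightarrow> i\<le>n-1 \<Longrightarrow> r i \<otimes> r i = \<one>"
  and ssf: "\<And>i j t l. 1\<le>i \<Longrightarrow> i\<le>n-1 \<Longrightarrow> 1\<le>j \<Longrightarrow> j\<le>n-1 \<Longrightarrow> (i\<ge>j+2 \<or> j\<ge>i+2) \<Longrightarrow>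
        1\<le>t \<Longrightarrow> t\<le>c \<Longrightarrow> 1\<le>l \<Longrightarrow> l\<le>c \<Longrightarrow> s i t \<otimes> s j l = s j l \<otimes> s i t"
  and srf: "\<And>i j t. 1\<le>i \<Longrightarrow> i\<le>n-1 \<Longrightarrow> 1\<le>j \<Longrightarrow> j\<le>n-1 \<Longrightarrow> (i\<ge>j+2 \<or> j\<ge>i+2) \<Longrightarrow>
        1\<le>t \<Longrightarrow> t\<le>c \<Longrightarrow> s i t \<otimes> r j = r j \<otimes> s i t"
  and cnj: "\<And>i t. 1\<le>i \<Longrightarrow> i\<le>n-2 \<Longrightarrow> 1\<le>t \<Longrightarrow> t\<le>c \<Longrightarrow>
        r i \<otimes> (r (i+1) \<otimes> s i t) = s (i+1) t \<otimes> (r i \<otimes> r (i+1))"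
  and meta: "\<And>x y. x \<in> derived G (carrier G) \<Longrightarrow> y \<in> derived G (carrier G) \<Longrightarrow> x \<otimes> y = y \<otimes> x"
  shows "(\<forall>i. 1\<le>i \<and> i\<le>n-1 \<longrightarrow> r i = r 1) \<and>
         (\<forall>i t. 1\<le>i \<and> i\<le>n-1 \<and> 1\<le>t \<and> t\<le>c \<longrightarrow> s i t = s 1 t) \<and>
         (\<forall>t. 1\<le>t \<and> t\<le>c \<longrightarrow> r 1 \<otimes> s 1 t = s 1 t \<otimes> r 1) \<and>
         (\<forall>t l. 1\<le>t \<and> t\<le>c \<and> 1\<le>l \<and> l\<le>c \<longrightarrow> s 1 t \<otimes> s 1 l = s 1 l \<otimes> s 1 t)"
proof -
  let ?D = "derived G (carrier G)"
  interpret D: subgroup ?D G by (rule derived_is_subgroup) simp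
  have step: "r (i+1) \<otimes> inv (r i) \<in> ?D" if "1\<le>i" "i\<le>n-2" for i
  proof (rule conj_D)
    have c: "r i \<in> carrier G" "r (i+1) \<in> carrier G" using rc that by auto
    show "r (i+1) \<in> carrier G" "r i \<in> carrier G" "r i \<otimes> r (i+1) \<in> carrier G" using c by auto
    have "r i \<otimes> r (i+1) \<otimes> r i = r (i+1) \<otimes> (r i \<otimes> r (i+1))" using braid[OF that] c by (simp add: m_assoc)
    thus "r (i+1) = r i \<otimes> r (i+1) \<otimes> r i \<otimes> inv (r i \<otimes> r (i+1))" using c
      by (simp add: m_assoc)
  qed
  have toone: "r i \<otimes> inv (r 1) \<in> ?D" if "1\<le>i" "i\<le>n-1" for i
    using that
  proof (induction i)
    case 0 then show ?case by simp
  next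
    case (Suc k)
    show ?case
    proof (cases "k = 0")
      case True then show ?thesis using rc[of 1] n5 by (simp add: D.one_closed)
    next
      case False
      have "r (Suc k) \<otimes> inv (r k) \<otimes> (r k \<otimes> inv (r 1)) \<in> ?D"
        using Suc False step[of k] by (intro D.m_closed[of "r (Suc k) \<otimes> inv (r k)"]) auto
      moreover have "r (Suc k) \<otimes> inv (r k) \<otimes> (r k \<otimes> inv (r 1)) = r (Suc k) \<otimes> inv (r 1)"
        using rc[of k] rc[of "Suc k"] rc[of 1] Suc False by (simp add: m_assoc)
      ultimately show ?thesis by simp
    qed
  qed
  have sim: "r i \<otimes> inv (r j) \<in> ?D" if "1\<le>i" "i\<le>n-1" "1\<le>j" "j\<le>n-1" for i j
  proof -
    have "r i \<otimes> inv (r 1) \<otimes> inv (r j \<otimes> inv (r 1)) \<in> ?D"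
      using toone[of i] toone[of j] that by (intro D.m_closed[of "r i \<otimes> inv (r 1)"] D.m_inv_closed) auto
    moreover have "r i \<otimes> inv (r 1) \<otimes> inv (r j \<otimes> inv (r 1)) = r i \<otimes> inv (r j)"
      using rc[of i] rc[of j] rc[of 1] that by (simp add: inv_mult_group m_assoc)
    ultimately show ?thesis by simp
  qed
  have K: "r i \<otimes> r (i+1) = r (i+1) \<otimes> r i" if "1\<le>i" "i\<le>n-2" "1\<le>k" "k\<le>n-1"
       "k+2 \<le> i \<or> i+3 \<le> k" for i k
  proof -
    have c1: "r i \<otimes> r k = r k \<otimes> r i" using that by (intro rrf) auto
    have c2: "r (i+1) \<otimes> r k = r k \<otimes> r (i+1)" using that by (intro rrf) auto
    show ?thesis using that
      by (intro keyK[of "r i" "r (i+1)" "r k", OF _ _ _ _ _ c1 c2 meta] rc sim) auto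
  qed
  have eqnext: "r (i+1) = r i" if "1\<le>i" "i\<le>n-2" "r i \<otimes> r (i+1) = r (i+1) \<otimes> r i" for i
    using braid_comm_eq[OF rc[of i] rc[of "i+1"] braid[OF that(1,2)] that(3)] that by auto
  have r21: "r 2 = r 1" using eqnext[of 1] K[of 1 4] n5 by (simp add: numeral_2_eq_2)
  have adjc: "r i \<otimes> r (i+1) = r (i+1) \<otimes> r i" if "1\<le>i" "i\<le>n-2" for i
  proof (cases "i = 2")
    case True
    have "r 1 \<otimes> r 3 = r 3 \<otimes> r 1" using n5 by (intro rrf) auto
    then show ?thesis using True r21 by simp
  next
    case False
    then show ?thesis using K[of i 4] K[of i 1] n5 that by (cases "i = 1") auto
  qed
  have allr: "1\<le>i \<longrightarrow> i\<le>n-1 \<longrightarrow> r i = r 1" for i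
  proof (induction i)
    case 0 then show ?case by simp
  next
    case (Suc k) then show ?case using eqnext[OF _ _ adjc, of k] by (cases "k = 0") auto
  qed
  have r1c: "r 1 \<in> carrier G" using rc n5 by auto
  have snext: "s (i+1) t = s i t" if "1\<le>i" "i\<le>n-2" "1\<le>t" "t\<le>c" for i t
  proof -
    have "r i = r 1" "r (i+1) = r 1" using allr[of i] allr[of "i+1"] that by auto
    moreover have "s i t \<in> carrier G" "s (i+1) t \<in> carrier G" using sc that by auto
    moreover have "r 1 \<otimes> r 1 = \<one>" using rsq n5 by auto
    ultimately show ?thesis using cnj[OF that] r1c by (simp add: m_assoc[symmetric])
  qed
  have alls: "1\<le>i \<longrightarrow> i\<le>n-1 \<longrightarrow> 1\<le>t \<longrightarrow> t\<le>c \<longrightarrow> s i t = s 1 t" for i t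
  proof (induction i)
    case 0 then show ?case by simp
  next
    case (Suc k) then show ?case using snext[of k t] by (cases "k = 0") auto
  qed
  have rs: "r 1 \<otimes> s 1 t = s 1 t \<otimes> r 1" if "1\<le>t" "t\<le>c" for t
  proof -
    have "s 1 t \<otimes> r 3 = r 3 \<otimes> s 1 t" using n5 that by (intro srf) auto
    then show ?thesis using allr[of 3] n5 by simp
  qed
  have ss: "s 1 t \<otimes> s 1 l = s 1 l \<otimes> s 1 t" if "1\<le>t" "t\<le>c" "1\<le>l" "l\<le>c" for t l
  proof -
    have "s 1 t \<otimes> s 3 l = s 3 l \<otimes> s 1 t" using n5 that by (intro ssf) auto
    then show ?thesis using alls[of 3 l] n5 that by simp
  qed
  show ?thesis using allr alls rs ss by blast
qed

end


definition wv :: "(gen \<Rightarrow> bool) \<Rightarrow> word \<Rightarrow> bool" where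
  "wv V w = (\<forall>y\<in>set w. V (fst y))"

definition cls :: "(gen \<Rightarrow> bool) \<Rightarrow> (word \<times> word) set \<Rightarrow> word \<Rightarrow> word set" where
  "cls V R w = {u. pres_eqv V R u w}"

definition invw :: "word \<Rightarrow> word" where
  "invw w = rev (map (\<lambda>(x,b). (x, \<not> b)) w)"

locale pres =
  fixes V :: "gen \<Rightarrow> bool" and R :: "(word \<times> word) set"
  assumes Rv: "\<And>u v. (u,v) \<in> R \<Longrightarrow> wv V u \<and> wv V v"
begin

abbreviation "E \<equiv> pres_eqv V R"
abbreviation "P \<equiv> presented_group V R"
abbreviation "C \<equiv> cls V R"

lemma E_valid: "E u v \<Longrightarrow> wv V u \<and> wv V v"
  by (induction rule: pres_eqv.induct) (auto simp: wv_def dest!: Rv[unfolded wv_def])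

lemma E_refl: "wv V w \<Longrightarrow> E w w"
  by (rule pres_eqv.refl) (simp add: wv_def)

lemma E_app: assumes "E u u'" "E v v'" shows "E (u @ v) (u' @ v')"
proof -
  have v: "wv V v" "wv V u'" using E_valid assms by auto
  have "E ([] @ u @ v) ([] @ u' @ v)" using assms(1) v by (intro pres_eqv.ctxt) (auto simp: wv_def)
  moreover have "E (u' @ v @ []) (u' @ v' @ [])" using assms(2) v by (intro pres_eqv.ctxt) (auto simp: wv_def)
  ultimately show ?thesis by (auto intro: pres_eqv.trans)
qed

lemma carrier_P: "carrier P = C ` {w. wv V w}"
proof -
  have "{u. E w u} = C w" if "wv V w" for w
    unfolding cls_def by (auto intro: pres_eqv.sym)
  then show ?thesis
    unfolding presented_group_def quotient_def by (auto simp: wv_def Image_def)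
qed

lemma C_eq: "wv V u \<Longrightarrow> wv V v \<Longrightarrow> (C u = C v) = E u v"
  unfolding cls_def
  by (auto intro: pres_eqv.sym pres_eqv.trans E_refl)

lemma mult_C: "wv V u \<Longrightarrow> wv V v \<Longrightarrow> C u \<otimes>\<^bsub>P\<^esub> C v = C (u @ v)"
  unfolding presented_group_def cls_def
  by (auto intro: pres_eqv.trans E_app E_refl)

lemma one_P: "\<one>\<^bsub>P\<^esub> = C []"
  unfolding presented_group_def cls_def by simp

lemma wv_Nil[simp]: "wv V []" by (simp add: wv_def)

lemma wv_app[simp]: "wv V (u @ v) = (wv V u \<and> wv V v)"
  by (auto simp: wv_def)

lemma wv_invw[simp]: "wv V (invw w) = wv V w"
  by (auto simp: wv_def invw_def)

lemma invw_invw[simp]: "invw (invw w) = w"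
  by (induction w) (auto simp: invw_def)

lemma E_inv: "wv V w \<Longrightarrow> E (w @ invw w) []"
proof (induction w)
  case Nil then show ?case by (simp add: E_refl wv_def invw_def)
next
  case (Cons l w)
  obtain x b where l: "l = (x,b)" by force
  have wl: "wv V w" "V x" using Cons l by (auto simp: wv_def)
  have "E ([(x,b)] @ (w @ invw w) @ [(x, \<not> b)]) ([(x,b)] @ [] @ [(x, \<not> b)])"
    using Cons wl by (intro pres_eqv.ctxt) (auto simp: wv_def)
  moreover have "E [(x,b),(x,\<not>b)] []" using wl(2) by (rule pres_eqv.cancel)
  ultimately have "E ([(x,b)] @ (w @ invw w) @ [(x, \<not> b)]) []" by (auto intro: pres_eqv.trans)
  then show ?case using l by (simp add: invw_def)
qed

lemma group_P: "group P"
proof (rule groupI)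
  fix x y assume "x \<in> carrier P" "y \<in> carrier P"
  then show "x \<otimes>\<^bsub>P\<^esub> y \<in> carrier P" by (auto simp: carrier_P mult_C)
next
  show "\<one>\<^bsub>P\<^esub> \<in> carrier P" by (auto simp: carrier_P one_P wv_def)
next
  fix x y z assume "x \<in> carrier P" "y \<in> carrier P" "z \<in> carrier P"
  then show "x \<otimes>\<^bsub>P\<^esub> y \<otimes>\<^bsub>P\<^esub> z = x \<otimes>\<^bsub>P\<^esub> (y \<otimes>\<^bsub>P\<^esub> z)" by (auto simp: carrier_P mult_C)
next
  fix x assume "x \<in> carrier P"
  then show "\<one>\<^bsub>P\<^esub> \<otimes>\<^bsub>P\<^esub> x = x" by (auto simp: carrier_P mult_C one_P wv_def)
next
  fix x assume "x \<in> carrier P"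
  then obtain w where w: "wv V w" "x = C w" by (auto simp: carrier_P)
  have "C (invw w) \<otimes>\<^bsub>P\<^esub> x = \<one>\<^bsub>P\<^esub>"
    using w E_inv[of "invw w"] by (simp add: mult_C one_P C_eq)
  moreover have "C (invw w) \<in> carrier P" using w by (auto simp: carrier_P)
  ultimately show "\<exists>y\<in>carrier P. y \<otimes>\<^bsub>P\<^esub> x = \<one>\<^bsub>P\<^esub>" by blast
qed

lemma C_rel: "(u,v) \<in> R \<Longrightarrow> C u = C v"
  using Rv by (simp add: C_eq pres_eqv.rel)

lemma C_carrier: "wv V w \<Longrightarrow> C w \<in> carrier P"
  by (auto simp: carrier_P)

lemma C_cons: "wv V (l # w) \<Longrightarrow> C (l # w) = C [l] \<otimes>\<^bsub>P\<^esub> C w"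
  using mult_C[of "[l]" w] by (simp add: wv_def)

lemma C_neg: assumes "V x" shows "C [(x,False)] = inv\<^bsub>P\<^esub> C [(x,True)]"
proof -
  interpret group P by (rule group_P)
  have "C [(x,False)] \<otimes>\<^bsub>P\<^esub> C [(x,True)] = \<one>\<^bsub>P\<^esub>"
    using assms mult_C[of "[(x,False)]" "[(x,True)]"] pres_eqv.cancel[where x=x and b=False]
    by (simp add: wv_def one_P C_eq)
  then show ?thesis using assms by (intro inv_equality[symmetric]) (auto intro: C_carrier simp: wv_def)
qed

end


lemma (in group) comm_of_commutator:
  "a \<in> carrier G \<Longrightarrow> b \<in> carrier G \<Longrightarrow> a \<otimes> b \<otimes> inv a \<otimes> inv b = \<one> \<Longrightarrow> a \<otimes> b = b \<otimes> a"
proof -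
  assume ab: "a \<in> carrier G" "b \<in> carrier G" and e: "a \<otimes> b \<otimes> inv a \<otimes> inv b = \<one>"
  have "(a \<otimes> b \<otimes> inv a \<otimes> inv b) \<otimes> (b \<otimes> a) = b \<otimes> a" using ab by (simp only: e l_one m_closed)
  moreover have "(a \<otimes> b \<otimes> inv a \<otimes> inv b) \<otimes> (b \<otimes> a) = a \<otimes> b" using ab by (simp add: m_assoc)
  ultimately show ?thesis by simp
qed

lemma uw_pres: "pres (valid_gen n c) (uw_rels n c)"
proof
  fix u v assume "(u, v) \<in> uw_rels n c"
  then show "wv (valid_gen n c) u \<and> wv (valid_gen n c) v"
    unfolding uw_rels_def uv_rels_def
    by (elim UnE CollectE exE conjE; auto simp: g_def wv_def valid_gen_def)
qed

theorem theorem5p8: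
  fixes n c :: nat
  assumes "n \<ge> 5" and "c \<ge> 1"
  shows "derived (UW n c) (derived (UW n c) (carrier (UW n c)))
         = derived (UW n c) (carrier (UW n c))"
proof -
  let ?V = "valid_gen n c" and ?R = "uw_rels n c"
  interpret pres ?V ?R by (rule uw_pres)
  let ?G = "UW n c"
  have GP: "?G = P" by (simp add: UW_def)
  interpret G: group ?G unfolding GP by (rule group_P)
  let ?D = "derived ?G (carrier ?G)"
  let ?E = "derived ?G ?D"
  have nD: "?D \<lhd> ?G" by (rule G.derived_self_is_normal)
  have nE: "?E \<lhd> ?G" by (rule G.derived_is_normal[OF nD])
  interpret N: normal ?E ?G by (rule nE)
  interpret DS: subgroup ?D ?G by (rule normal_imp_subgroup[OF nD])
  have ED: "?E \<subseteq> ?D" by (rule G.derived_incl[OF subset_refl DS.subgroup_axioms])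
  let ?Q = "?G Mod ?E"
  let ?h = "\<lambda>a. ?E #>\<^bsub>?G\<^esub> a"
  interpret Q: group ?Q by (rule N.factorgroup_is_group)
  interpret hQ: group_hom ?G ?Q ?h
    by (unfold_locales) (rule N.r_coset_hom_Mod)
  have surj: "?h ` carrier ?G = carrier ?Q" by (rule carrier_FactGroup[symmetric])
  have hE: "?h ` ?E = {\<one>\<^bsub>?Q\<^esub>}"
  proof -
    have h1: "?h e = ?E" if "e \<in> ?E" for e
      using that by (intro N.rcos_const) (rule G.group_axioms)
    have o: "\<one>\<^bsub>?G\<^esub> \<in> ?E" by (rule N.one_closed)
    have "?h ` ?E = {?E}"
    proof
      show "?h ` ?E \<subseteq> {?E}" using h1 by blast
      have "?E \<in> ?h ` ?E" using h1[OF o] o by (metis image_eqI)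
      then show "{?E} \<subseteq> ?h ` ?E" by blast
    qed
    then show ?thesis by (simp only: one_FactGroup)
  qed
  have QD0: "derived ?Q (?h ` carrier ?G) = ?h ` ?D" by (rule hQ.derived_img) (rule subset_refl)
  have QD: "derived ?Q (carrier ?Q) = ?h ` ?D" using QD0 by (simp only: surj)
  have QDD0: "derived ?Q (?h ` ?D) = ?h ` ?E" by (rule hQ.derived_img[OF DS.subset])
  have QDD: "derived ?Q (derived ?Q (carrier ?Q)) = {\<one>\<^bsub>?Q\<^esub>}" using QDD0 by (simp only: QD hE)
  have meta: "x \<otimes>\<^bsub>?Q\<^esub> y = y \<otimes>\<^bsub>?Q\<^esub> x"
    if xy: "x \<in> derived ?Q (carrier ?Q)" "y \<in> derived ?Q (carrier ?Q)" for x y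
  proof -
    have sub: "derived ?Q (carrier ?Q) \<subseteq> carrier ?Q" by (rule Q.derived_in_carrier) (rule subset_refl)
    have "x \<otimes>\<^bsub>?Q\<^esub> y \<otimes>\<^bsub>?Q\<^esub> inv\<^bsub>?Q\<^esub> x \<otimes>\<^bsub>?Q\<^esub> inv\<^bsub>?Q\<^esub> y
          \<in> derived_set ?Q (derived ?Q (carrier ?Q))"
      by (rule UN_I[OF xy(1)], rule UN_I[OF xy(2)], rule singletonI)
    then have "x \<otimes>\<^bsub>?Q\<^esub> y \<otimes>\<^bsub>?Q\<^esub> inv\<^bsub>?Q\<^esub> x \<otimes>\<^bsub>?Q\<^esub> inv\<^bsub>?Q\<^esub> y
          \<in> derived ?Q (derived ?Q (carrier ?Q))"
      unfolding derived_def[of ?Q "derived ?Q (carrier ?Q)"] by (rule generate.incl)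
    then have "x \<otimes>\<^bsub>?Q\<^esub> y \<otimes>\<^bsub>?Q\<^esub> inv\<^bsub>?Q\<^esub> x \<otimes>\<^bsub>?Q\<^esub> inv\<^bsub>?Q\<^esub> y = \<one>\<^bsub>?Q\<^esub>"
      unfolding QDD by (rule singletonD)
    moreover have "x \<in> carrier ?Q" "y \<in> carrier ?Q" using sub xy by auto
    ultimately show ?thesis by (intro Q.comm_of_commutator)
  qed
  define f where "f x = ?h (C (g x))" for x
  have mC: "C u \<otimes>\<^bsub>?G\<^esub> C v = C (u @ v)" if "wv ?V u" "wv ?V v" for u v
    using mult_C[OF that] GP by simp
  have cC: "C w \<in> carrier ?G" if "wv ?V w" for w using C_carrier[OF that] GP by simp
  have oC: "\<one>\<^bsub>?G\<^esub> = C []" using one_P GP by simp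
  have cG: "carrier ?G = C ` {w. wv ?V w}" using carrier_P GP by simp
  have nG: "C [(x,False)] = inv\<^bsub>?G\<^esub> C [(x,True)]" if "?V x" for x using C_neg[OF that] GP by simp
  have hC_app: "?h (C (u @ v)) = ?h (C u) \<otimes>\<^bsub>?Q\<^esub> ?h (C v)" if "wv ?V u" "wv ?V v" for u v
    using hQ.hom_mult[OF cC[OF that(1)] cC[OF that(2)]] mC[OF that] by simp
  have gv: "wv ?V (g x) = ?V x" for x by (simp add: g_def wv_def)
  have fc: "f x \<in> carrier ?Q" if "?V x" for x
    using that cC[of "g x"] gv unfolding f_def by (intro hQ.hom_closed) simp
  have rel2: "f a \<otimes>\<^bsub>?Q\<^esub> f b = f b' \<otimes>\<^bsub>?Q\<^esub> f a'"
    if "(g a @ g b, g b' @ g a') \<in> ?R" "?V a" "?V b" "?V a'" "?V b'" for a b a' b'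
    using C_rel[OF that(1)] hC_app that gv unfolding f_def by (metis)
  have rel3: "f a \<otimes>\<^bsub>?Q\<^esub> (f b \<otimes>\<^bsub>?Q\<^esub> f d) = f a' \<otimes>\<^bsub>?Q\<^esub> (f b' \<otimes>\<^bsub>?Q\<^esub> f d')"
    if "(g a @ g b @ g d, g a' @ g b' @ g d') \<in> ?R" "?V a" "?V b" "?V d" "?V a'" "?V b'" "?V d'"
    for a b d a' b' d'
  proof -
    have "?h (C (g a @ g b @ g d)) = ?h (C (g a' @ g b' @ g d'))" using C_rel[OF that(1)] by simp
    then show ?thesis using that gv unfolding f_def by (simp add: hC_app)
  qed
  have rel0: "f a \<otimes>\<^bsub>?Q\<^esub> f b = \<one>\<^bsub>?Q\<^esub>" if "(g a @ g b, []) \<in> ?R" "?V a" "?V b" for a b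
  proof -
    have "?h (C (g a @ g b)) = ?h (C [])" using C_rel[OF that(1)] by simp
    moreover have "?h (C []) = \<one>\<^bsub>?Q\<^esub>" unfolding oC[symmetric] by (rule hQ.hom_one)
    ultimately show ?thesis using that gv unfolding f_def by (simp add: hC_app)
  qed
  have core: "(\<forall>i. 1\<le>i \<and> i\<le>n-1 \<longrightarrow> f (Rho i) = f (Rho 1)) \<and>
         (\<forall>i t. 1\<le>i \<and> i\<le>n-1 \<and> 1\<le>t \<and> t\<le>c \<longrightarrow> f (Sig i t) = f (Sig 1 t)) \<and>
         (\<forall>t. 1\<le>t \<and> t\<le>c \<longrightarrow> f (Rho 1) \<otimes>\<^bsub>?Q\<^esub> f (Sig 1 t) = f (Sig 1 t) \<otimes>\<^bsub>?Q\<^esub> f (Rho 1)) \<and>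
         (\<forall>t l. 1\<le>t \<and> t\<le>c \<and> 1\<le>l \<and> l\<le>c \<longrightarrow> f (Sig 1 t) \<otimes>\<^bsub>?Q\<^esub> f (Sig 1 l) = f (Sig 1 l) \<otimes>\<^bsub>?Q\<^esub> f (Sig 1 t))"
  proof (rule Q.core[where r = "\<lambda>i. f (Rho i)" and s = "\<lambda>i t. f (Sig i t)", OF assms(1) _ _ _ _ _ _ _ _ meta])
    show "f (Rho i) \<in> carrier ?Q" if "1\<le>i" "i\<le>n-1" for i using that by (intro fc) (simp add: valid_gen_def)
    show "f (Sig i t) \<in> carrier ?Q" if "1\<le>i" "i\<le>n-1" "1\<le>t" "t\<le>c" for i t
      using that by (intro fc) (simp add: valid_gen_def)
    show "f (Rho i) \<otimes>\<^bsub>?Q\<^esub> (f (Rho (i+1)) \<otimes>\<^bsub>?Q\<^esub> f (Rho i)) = f (Rho (i+1)) \<otimes>\<^bsub>?Q\<^esub> (f (Rho i) \<otimes>\<^bsub>?Q\<^esub> f (Rho (i+1)))"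
      if "1\<le>i" "i\<le>n-2" for i
      using that by (intro rel3) (auto simp: uw_rels_def uv_rels_def valid_gen_def)
    show "f (Rho i) \<otimes>\<^bsub>?Q\<^esub> f (Rho j) = f (Rho j) \<otimes>\<^bsub>?Q\<^esub> f (Rho i)"
      if "1\<le>i" "i\<le>n-1" "1\<le>j" "j\<le>n-1" "i\<ge>j+2 \<or> j\<ge>i+2" for i j
      using that by (intro rel2) (auto simp: uw_rels_def uv_rels_def valid_gen_def)
    show "f (Rho i) \<otimes>\<^bsub>?Q\<^esub> f (Rho i) = \<one>\<^bsub>?Q\<^esub>" if "1\<le>i" "i\<le>n-1" for i
      using that by (intro rel0) (auto simp: uw_rels_def uv_rels_def valid_gen_def)
    show "f (Sig i t) \<otimes>\<^bsub>?Q\<^esub> f (Sig j l) = f (Sig j l) \<otimes>\<^bsub>?Q\<^esub> f (Sig i t)"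
      if "1\<le>i" "i\<le>n-1" "1\<le>j" "j\<le>n-1" "i\<ge>j+2 \<or> j\<ge>i+2" "1\<le>t" "t\<le>c" "1\<le>l" "l\<le>c" for i j t l
      using that by (intro rel2) (auto simp: uw_rels_def uv_rels_def valid_gen_def)
    show "f (Sig i t) \<otimes>\<^bsub>?Q\<^esub> f (Rho j) = f (Rho j) \<otimes>\<^bsub>?Q\<^esub> f (Sig i t)"
      if "1\<le>i" "i\<le>n-1" "1\<le>j" "j\<le>n-1" "i\<ge>j+2 \<or> j\<ge>i+2" "1\<le>t" "t\<le>c" for i j t
      using that by (intro rel2) (auto simp: uw_rels_def uv_rels_def valid_gen_def)
    show "f (Rho i) \<otimes>\<^bsub>?Q\<^esub> (f (Rho (i+1)) \<otimes>\<^bsub>?Q\<^esub> f (Sig i t)) = f (Sig (i+1) t) \<otimes>\<^bsub>?Q\<^esub> (f (Rho i) \<otimes>\<^bsub>?Q\<^esub> f (Rho (i+1)))"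
      if "1\<le>i" "i\<le>n-2" "1\<le>t" "t\<le>c" for i t
      using that by (intro rel3) (auto simp: uw_rels_def uv_rels_def valid_gen_def)
  qed
  have R1: "f (Rho i) = f (Rho 1)" if "1\<le>i" "i\<le>n-1" for i using core that by blast
  have S1: "f (Sig i t) = f (Sig 1 t)" if "1\<le>i" "i\<le>n-1" "1\<le>t" "t\<le>c" for i t using core that by blast
  have RS: "f (Rho 1) \<otimes>\<^bsub>?Q\<^esub> f (Sig 1 t) = f (Sig 1 t) \<otimes>\<^bsub>?Q\<^esub> f (Rho 1)" if "1\<le>t" "t\<le>c" for t
    using core that by blast
  have SS: "f (Sig 1 t) \<otimes>\<^bsub>?Q\<^esub> f (Sig 1 l) = f (Sig 1 l) \<otimes>\<^bsub>?Q\<^esub> f (Sig 1 t)"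
    if "1\<le>t" "t\<le>c" "1\<le>l" "l\<le>c" for t l using core that by blast
  have nf: "f x = f (Rho 1) \<or> (\<exists>t. 1\<le>t \<and> t\<le>c \<and> f x = f (Sig 1 t))" if "?V x" for x
  proof (cases x)
    case (Rho i) then show ?thesis using that R1[of i] by (simp add: valid_gen_def)
  next
    case (Sig i t) then show ?thesis using that S1[of i t] by (auto simp: valid_gen_def)
  qed
  have fcomm: "f x \<otimes>\<^bsub>?Q\<^esub> f y = f y \<otimes>\<^bsub>?Q\<^esub> f x" if "?V x" "?V y" for x y
  proof -
    from nf[OF that(1)] nf[OF that(2)] show ?thesis
    proof (elim disjE exE conjE)
      assume "f x = f (Rho 1)" "f y = f (Rho 1)" then show ?thesis by simp
    next
      fix t assume "f x = f (Rho 1)" "1\<le>t" "t\<le>c" "f y = f (Sig 1 t)"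
      then show ?thesis using RS[of t] by simp
    next
      fix t assume "f y = f (Rho 1)" "1\<le>t" "t\<le>c" "f x = f (Sig 1 t)"
      then show ?thesis using RS[of t] by simp
    next
      fix t l assume "1\<le>t" "t\<le>c" "f x = f (Sig 1 t)" "1\<le>l" "l\<le>c" "f y = f (Sig 1 l)"
      then show ?thesis using SS[of t l] by simp
    qed
  qed
  have letter: "(\<forall>y. ?V y \<longrightarrow> ?h (C [l]) \<otimes>\<^bsub>?Q\<^esub> f y = f y \<otimes>\<^bsub>?Q\<^esub> ?h (C [l])) \<and> ?h (C [l]) \<in> carrier ?Q"
    if "?V (fst l)" for l
  proof -
    obtain x b where l: "l = (x,b)" by force
    have x: "?V x" using that l by simp
    have cg: "C [(x,True)] \<in> carrier ?G" using x cC[of "[(x,True)]"] by (simp add: wv_def)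
    show ?thesis
    proof (cases b)
      case True then show ?thesis using l x fcomm fc unfolding f_def g_def by simp
    next
      case False
      have "?h (C [l]) = inv\<^bsub>?Q\<^esub> f x" using l False nG[OF x] cg unfolding f_def g_def
        by (simp add: hQ.hom_inv)
      then show ?thesis using x fcomm fc Q.comm_inv by simp
    qed
  qed
  have wcomm: "(\<forall>y. ?V y \<longrightarrow> ?h (C w) \<otimes>\<^bsub>?Q\<^esub> f y = f y \<otimes>\<^bsub>?Q\<^esub> ?h (C w))" if "wv ?V w" for w
    using that
  proof (induction w)
    case Nil
    have e: "?h (C []) = \<one>\<^bsub>?Q\<^esub>" unfolding oC[symmetric] by (rule hQ.hom_one)
    show ?case
    proof (intro allI impI)
      fix y assume y: "?V y"
      show "?h (C []) \<otimes>\<^bsub>?Q\<^esub> f y = f y \<otimes>\<^bsub>?Q\<^esub> ?h (C [])"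
        by (simp only: e Q.l_one[OF fc[OF y]] Q.r_one[OF fc[OF y]])
    qed
  next
    case (Cons l w)
    have lw: "?V (fst l)" "wv ?V w" using Cons.prems by (auto simp: wv_def)
    have hc: "?h (C w) \<in> carrier ?Q" using lw cC by (intro hQ.hom_closed) simp
    have "?h (C (l # w)) = ?h (C [l]) \<otimes>\<^bsub>?Q\<^esub> ?h (C w)"
      using hC_app[of "[l]" w] lw by (simp add: wv_def)
    then show ?case using Q.comm_mult[OF _ hc fc] letter[OF lw(1)] Cons.IH[OF lw(2)] by simp
  qed
  have wcomm2: "?h (C w) \<otimes>\<^bsub>?Q\<^esub> ?h (C w') = ?h (C w') \<otimes>\<^bsub>?Q\<^esub> ?h (C w)"
    if "wv ?V w" "wv ?V w'" for w w'
    using that(2)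
  proof (induction w')
    case Nil
    have e: "?h (C []) = \<one>\<^bsub>?Q\<^esub>" unfolding oC[symmetric] by (rule hQ.hom_one)
    have hw: "?h (C w) \<in> carrier ?Q" using that cC by (intro hQ.hom_closed) simp
    show ?case by (simp only: e Q.l_one[OF hw] Q.r_one[OF hw])
  next
    case (Cons l w')
    have lw: "?V (fst l)" "wv ?V w'" using Cons.prems by (auto simp: wv_def)
    have hc: "?h (C w') \<in> carrier ?Q" using lw cC by (intro hQ.hom_closed) simp
    have hw: "?h (C w) \<in> carrier ?Q" using that cC by (intro hQ.hom_closed) simp
    have e: "?h (C (l # w')) = ?h (C [l]) \<otimes>\<^bsub>?Q\<^esub> ?h (C w')"
      using hC_app[of "[l]" w'] lw by (simp add: wv_def)
    obtain x b where l: "l = (x,b)" by force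
    have x: "?V x" using lw l by simp
    have cg: "C [(x,True)] \<in> carrier ?G" using x cC[of "[(x,True)]"] by (simp add: wv_def)
    have lc: "?h (C [l]) \<otimes>\<^bsub>?Q\<^esub> ?h (C w) = ?h (C w) \<otimes>\<^bsub>?Q\<^esub> ?h (C [l])"
    proof (cases b)
      case True then show ?thesis using l x wcomm[OF that(1)] unfolding f_def g_def by simp
    next
      case False
      have "?h (C [l]) = inv\<^bsub>?Q\<^esub> f x" using l False nG[OF x] cg unfolding f_def g_def
        by (simp add: hQ.hom_inv)
      then show ?thesis using x wcomm[OF that(1)] fc Q.comm_inv[OF fc[OF x] hw] by simp
    qed
    have lcc: "?h (C [l]) \<in> carrier ?Q" using letter[OF lw(1)] by simp
    show ?case using e Q.comm_mult[OF lcc hc hw] lc Cons.IH[OF lw(2)] by simp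
  qed
  have "comm_group ?Q"
  proof (rule Q.group_comm_groupI)
    fix x y assume "x \<in> carrier ?Q" "y \<in> carrier ?Q"
    have rep: "\<exists>u. wv ?V u \<and> z = ?h (C u)" if "z \<in> carrier ?Q" for z
    proof -
      have "z \<in> ?h ` carrier ?G" using that surj by simp
      then obtain a where a: "a \<in> carrier ?G" "z = ?h a" by blast
      have "a \<in> C ` {w. wv ?V w}" using a(1) cG by simp
      then obtain u where "wv ?V u" "a = C u" by blast
      then show ?thesis using a by blast
    qed
    obtain u where u: "wv ?V u" "x = ?h (C u)" using rep[OF \<open>x \<in> carrier ?Q\<close>] by blast
    obtain v where v: "wv ?V v" "y = ?h (C v)" using rep[OF \<open>y \<in> carrier ?Q\<close>] by blast
    show "x \<otimes>\<^bsub>?Q\<^esub> y = y \<otimes>\<^bsub>?Q\<^esub> x" unfolding u(2) v(2) by (rule wcomm2[OF u(1) v(1)])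
  qed
  then have "?D \<subseteq> ?E" by (rule G.derived_minimal[OF nE])
  then show ?thesis by (rule equalityI[OF ED])
qed

end
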